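(* Let $D_4(s,t) = 3s^2t^2$, $D_5(s,t) = s^4t + 4s^2t^3$, and $D_n(s,t) = t\,D_{n-1}(s,t) + s^2 D_{n-2}(s,t)$ for $n > 5$. For every integer $n \geq 4$ there exists $\epsilon(n) > 0$ such that for all real $s,t$ with $t>0$ and $t \leq s \leq t(1+\epsilon(n))$, the maximum of $|\det A|$ over all $A \in \mathcal{G}_s^{n\times n}([0,t])$ equals $D_n(s,t)$.
   Context: For a real number $s$, a positive integer $n$ and a set $P \subseteq \mathbb{R}$, $\mathcal{G}_s^{n\times n}(P)$ denotes the set of all $n\times n$ real upper Hessenberg matrices $A=(a_{ij})$ with $a_{i+1,i} = s$ for $1\le i\le n-1$, $a_{ij}=0$ for $i > j+1$, and $a_{ij}\in P$ for all $i \le j$. *)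

theory Defs
  imports "Jordan_Normal_Form.Determinant"
begin

text \<open>The polynomials D_n(s,t); only the values for n \<ge> 4 are meaningful
  (D_4 = 3 s^2 t^2, D_5 = s^4 t + 4 s^2 t^3, D_n = t D_(n-1) + s^2 D_(n-2) for n > 5);
  values for n < 4 are set to 0 and never used.\<close>
fun D :: "nat \<Rightarrow> real \<Rightarrow> real \<Rightarrow> real" where
  "D 0 s t = 0"
| "D (Suc 0) s t = 0"
| "D (Suc (Suc n)) s t =
     (if n < 2 then 0
      else if n = 2 then 3 * s^2 * t^2
      else if n = 3 then s^4 * t + 4 * s^2 * t^3
      else t * D (Suc n) s t + s^2 * D n s t)"

definition hess_set :: "real \<Rightarrow> nat \<Rightarrow> real set \<Rightarrow> real mat set" where
  "hess_set s n P = {A \<in> carrier_mat n n.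
      \<forall>i<n. \<forall>j<n. (i = j + 1 \<longrightarrow> A $$ (i, j) = s)
                \<and> (i > j + 1 \<longrightarrow> A $$ (i, j) = 0)
                \<and> (i \<le> j \<longrightarrow> A $$ (i, j) \<in> P)}"

end

theory Submission
  imports Defs
begin



lemma rfacts:
  assumes "1 \<le> (r::real)" "r \<le> 5/4"
  shows "r^2 \<le> 2" "1 \<le> r^2" "(r - 1) * 2 \<le> r^2" "0 \<le> 1 + r^2 - r"
        "0 \<le> 1 - r + 2*r^2 - r^3"
proof -
  have a: "r * r \<le> 5/4 * r" using assms by (intro mult_right_mono) auto
  have b: "r \<le> r * r" using assms by (simp add: mult_le_cancel_left1)
  have e: "r * (r * r) \<le> 5/4 * (r*r)" using assms by (intro mult_right_mono) auto
  have c: "r * r * r \<le> 5/4 * (r * r)" using e by (simp add: mult.assoc)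
  have d: "r * r \<le> r * r * r" using assms b by (simp add: mult_le_cancel_left1)
  have "r * r \<le> 2" using assms a by linarith
  thus "r^2 \<le> 2" by (simp add: power2_eq_square)
  have "1 \<le> r * r" using assms b by linarith
  thus "1 \<le> r^2" by (simp add: power2_eq_square)
  have "2 * r - 2 \<le> r * r" using assms b by linarith
  thus "(r - 1) * 2 \<le> r^2" by (simp add: power2_eq_square algebra_simps)
  have "0 \<le> 1 + r * r - r" using assms b by linarith
  thus "0 \<le> 1 + r^2 - r" by (simp add: power2_eq_square)
  have "r + r * (r * r) \<le> 1 + r * (r * 2)" using assms b e by linarith
  thus "0 \<le> 1 - r + 2*r^2 - r^3" by (simp add: power2_eq_square power3_eq_cube algebra_simps)
qed

fun p :: "real \<Rightarrow> nat \<Rightarrow> real" where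
  "p r 0 = 1 / r"
| "p r (Suc 0) = r"
| "p r (Suc (Suc k)) = p r (Suc k) + r^2 * p r k"

lemma p_bounds:
  assumes r1: "1 \<le> r" and r2: "r \<le> 5/4"
  shows "0 < p r k \<and> r^2 * p r k \<le> p r (Suc k) \<and> p r (Suc k) \<le> 2 * p r k"
proof (induction k)
  case 0
  have "r * r \<le> 2" using rfacts(1)[OF r1 r2] by (simp add: power2_eq_square)
  then show ?case using r1 by (simp add: power2_eq_square field_simps)
next
  case (Suc k)
  let ?a = "p r k" and ?b = "p r (Suc k)"
  have e: "p r (Suc (Suc k)) = ?b + r^2 * ?a" by simp
  from Suc.IH have h: "0 < ?a" "r^2 * ?a \<le> ?b" "?b \<le> 2 * ?a" by auto
  have rr: "1 \<le> r^2" "r^2 \<le> 2" using rfacts[OF r1 r2] by auto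
  have pb: "0 < ?b" using h rr by (smt (verit) mult_pos_pos)
  have "(r^2 - 1) * ?b \<le> (r^2 - 1) * (2 * ?a)" using h rr by (intro mult_left_mono) auto
  moreover have "(r^2 - 2) * ?a \<le> 0" using h rr by (simp add: mult_nonpos_nonneg)
  ultimately have "r^2 * ?b \<le> ?b + r^2 * ?a" by (simp add: algebra_simps)
  then show ?case unfolding e using pb h by simp
qed

lemma p_pos: "1 \<le> r \<Longrightarrow> r \<le> 5/4 \<Longrightarrow> 0 < p r k" using p_bounds by blast
lemma p_lo: "1 \<le> r \<Longrightarrow> r \<le> 5/4 \<Longrightarrow> r^2 * p r k \<le> p r (Suc k)" using p_bounds by blast
lemma p_hi: "1 \<le> r \<Longrightarrow> r \<le> 5/4 \<Longrightarrow> p r (Suc k) \<le> 2 * p r k" using p_bounds by blast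

lemma p_lo1: assumes "1 \<le> r" "r \<le> 5/4" shows "r * p r k \<le> p r (Suc k)"
proof -
  have "r * p r k \<le> r^2 * p r k" using assms p_pos[OF assms, of k]
    by (intro mult_right_mono) (auto simp: power2_eq_square)
  thus ?thesis using p_lo[OF assms, of k] by linarith
qed

lemma p_lo2: assumes "1 \<le> r" "r \<le> 5/4" shows "r * p r (Suc k) \<le> p r (Suc (Suc k))"
proof -
  have "r * p r (Suc k) \<le> p r (Suc k) + r^2 * p r k"
  proof -
    have h: "p r (Suc k) \<le> 2 * p r k" "0 < p r k" using p_hi[OF assms] p_pos[OF assms] by auto
    have "(r - 1) * p r (Suc k) \<le> (r - 1) * (2 * p r k)" using h assms by (intro mult_left_mono) auto
    moreover have "(r - 1) * 2 \<le> r^2" using rfacts[OF assms] by auto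
    hence "(r - 1) * 2 * p r k \<le> r^2 * p r k" using h by (intro mult_right_mono) auto
    ultimately show ?thesis by (simp add: algebra_simps)
  qed
  thus ?thesis by simp
qed

definition "fX1 r j = r * p r (j+2) + r * p r (j+1)"
definition "fX2 r j = r^2 * p r (j+1)"
definition "fY1 r j = r * p r (j+1) + (r + r^3) * p r j"
definition "fY2 r j = r^2 * p r (j+1) + r^2 * p r j"
definition "fZ1 r j = p r (j+3)"
definition "fZ2 r j = r * p r (j+2)"

definition Phi :: "real \<Rightarrow> nat \<Rightarrow> real \<Rightarrow> real \<Rightarrow> real" where
  "Phi r j a b = max (max (fX1 r j * a + fX2 r j * b) (fX1 r j * b + fX2 r j * a))
     (max (max (fY1 r j * a + fY2 r j * b) (fY1 r j * b + fY2 r j * a))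
          (max (fZ1 r j * a + fZ2 r j * b) (fZ1 r j * b + fZ2 r j * a)))"

lemma Phi_sym: "Phi r j a b = Phi r j b a"
  unfolding Phi_def by (simp add: max.commute)

lemma lin_le: "c1 \<le> d1 \<Longrightarrow> c2 \<le> d2 \<Longrightarrow> 0 \<le> (a::real) \<Longrightarrow> 0 \<le> b \<Longrightarrow> c1*a + c2*b \<le> d1*a + d2*b"
  by (intro add_mono mult_right_mono) auto

lemma phi_ge:
  "fX1 r j * a + fX2 r j * b \<le> Phi r j a b"
  "fX1 r j * b + fX2 r j * a \<le> Phi r j a b"
  "fY1 r j * a + fY2 r j * b \<le> Phi r j a b"
  "fY1 r j * b + fY2 r j * a \<le> Phi r j a b"
  "fZ1 r j * a + fZ2 r j * b \<le> Phi r j a b"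
  "fZ1 r j * b + fZ2 r j * a \<le> Phi r j a b"
  unfolding Phi_def by auto

lemma lin_le2: "c1 \<le> d1 \<Longrightarrow> c2 \<le> d2 \<Longrightarrow> 0 \<le> (a::real) \<Longrightarrow> 0 \<le> b \<Longrightarrow> L = c1*a + c2*b \<Longrightarrow> R = d1*a + d2*b \<Longrightarrow> L \<le> R"
  using lin_le by blast

lemma Phi_stepL:
  assumes r: "1 \<le> r" "r \<le> 5/4" and ab: "0 \<le> a" "0 \<le> b"
  shows "Phi r j (r*a+b) (r*b) \<le> Phi r (Suc j) a b"
proof -
  define P0 where "P0 = p r j"
  define P1 where "P1 = p r (j+1)"
  have P2: "p r (j+2) = P1 + r^2 * P0" unfolding P0_def P1_def by (simp add: numeral_2_eq_2)
  have P3: "p r (j+3) = (P1 + r^2 * P0) + r^2 * P1" unfolding P0_def P1_def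
    by (simp add: numeral_3_eq_3 numeral_2_eq_2)
  have P4: "p r (Suc j+3) = ((P1 + r^2 * P0) + r^2 * P1) + r^2 * (P1 + r^2 * P0)" unfolding P0_def P1_def
    by (simp add: numeral_3_eq_3 numeral_2_eq_2)
  have P4': "p r (j+4) = ((P1 + r^2 * P0) + r^2 * P1) + r^2 * (P1 + r^2 * P0)" using P4 by (simp add: eval_nat_numeral)
  have P2': "p r (Suc j+2) = (P1 + r^2 * P0) + r^2 * P1" using P3 by (simp add: numeral_3_eq_3 numeral_2_eq_2)
  have P1': "p r (Suc j+1) = P1 + r^2 * P0" using P2 by (simp add: numeral_2_eq_2)
  have P0': "p r (Suc j) = P1" unfolding P1_def by simp
  have pos: "0 < P0" "0 < P1" unfolding P0_def P1_def using p_pos[OF r] by auto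
  have lo: "r * P0 \<le> P1" unfolding P0_def P1_def using p_lo1[OF r, of j] by simp
  have lo2: "r^2 * P0 \<le> P1" unfolding P0_def P1_def using p_lo[OF r, of j] by simp
  have lo3: "r * P1 \<le> P1 + r^2 * P0" using p_lo2[OF r, of j] unfolding P0_def P1_def by simp
  note defs = fX1_def fX2_def fY1_def fY2_def fZ1_def fZ2_def P2 P3 P4 P4' P2' P1' P0' P0_def[symmetric] P1_def[symmetric]
  have d1: "0 \<le> P1 - r * P0" using lo by simp
  have d2: "0 \<le> (P1 + r^2 * P0) - r * P1" using lo3 by simp
  have d3: "0 \<le> P1 - r^2 * P0" using lo2 by simp
  have rr1: "0 \<le> r * (2 - r)" using r by simp
  have rr2: "0 \<le> 1 + r^2 - r" using rfacts[OF r] by auto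
  have rr3: "0 \<le> 1 - r + 2*r^2 - r^3" using rfacts[OF r] by auto
  have i1: "r * (r^2 * P1) \<le> r^2 * (P1 + r^2 * P0)"
  proof -
    have "0 \<le> r^2 * ((P1 + r^2 * P0) - r * P1)" using d2 by simp
    thus ?thesis by (simp add: algebra_simps power2_eq_square)
  qed
  have i2: "r * (r * (P1 + r^2 * P0) + r * P1) + r^2 * P1 \<le> r * ((P1 + r^2 * P0) + r^2 * P1) + r * (P1 + r^2 * P0)"
  proof -
    have "0 \<le> (r * (2 - r)) * ((P1 + r^2 * P0) - r * P1)" using d2 rr1 by simp
    thus ?thesis by (simp add: algebra_simps power2_eq_square power3_eq_cube)
  qed
  have i3: "r * P1 + (r + r^3) * P0 \<le> (P1 + r^2 * P0) + r^2 * P1"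
  proof -
    have "0 \<le> (1 + r^2 - r) * (P1 - r * P0)" using d1 rr2 by simp
    thus ?thesis by (simp add: algebra_simps power2_eq_square power3_eq_cube)
  qed
  have i4: "(r * P1 + (r + r^3) * P0) + r * (r^2 * P1 + r^2 * P0) \<le> ((P1 + r^2 * P0) + r^2 * P1) + r^2 * (P1 + r^2 * P0)"
  proof -
    have "0 \<le> (1 - r + 2*r^2 - r^3) * (P1 - r * P0)" using d1 rr3 by simp
    thus ?thesis by (simp add: algebra_simps power2_eq_square power3_eq_cube)
  qed
  have i5: "r^2 * P1 + r^2 * P0 \<le> (P1 + r^2 * P0) + r^2 * P1" using pos by simp
  have i6: "r * (r * P1 + (r + r^3) * P0) + (r^2 * P1 + r^2 * P0) \<le> ((P1 + r^2 * P0) + r^2 * P1) + r^2 * (P1 + r^2 * P0)"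
  proof -
    have "0 \<le> P1 - r^2 * P0" using d3 by simp
    thus ?thesis by (simp add: algebra_simps power2_eq_square power3_eq_cube)
  qed
  have rpos: "0 \<le> r" using r by simp
  note i3' = mult_left_mono[OF i3 rpos]
  note i5' = mult_left_mono[OF i5 rpos]
  show ?thesis
    unfolding Phi_def[of r j]
  proof (intro max.boundedI)
    show "fX1 r j * (r * a + b) + fX2 r j * (r * b) \<le> Phi r (Suc j) a b"
    proof -
      have "fX1 r j * (r * a + b) + fX2 r j * (r * b) = (r * fX1 r j) * a + (fX1 r j + r * fX2 r j) * b" by (simp add: algebra_simps)
      also have "\<dots> \<le> (fY2 r (Suc j)) * a + (fY1 r (Suc j)) * b"
      proof (rule lin_le[OF _ _ ab])
      show "r * fX1 r j \<le> fY2 r (Suc j)" by (simp add: defs algebra_simps power2_eq_square power3_eq_cube)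
      show "fX1 r j + r * fX2 r j \<le> fY1 r (Suc j)" by (simp add: defs algebra_simps power2_eq_square power3_eq_cube)
      qed
      also have "\<dots> \<le> Phi r (Suc j) a b" using phi_ge(4)[where r=r and j="Suc j" and a=a and b=b] by (simp add: add.commute)
      finally show ?thesis .
    qed
    show "fX1 r j * (r * b) + fX2 r j * (r * a + b) \<le> Phi r (Suc j) a b"
    proof -
      have "fX1 r j * (r * b) + fX2 r j * (r * a + b) = (r * fX2 r j) * a + (r * fX1 r j + fX2 r j) * b" by (simp add: algebra_simps)
      also have "\<dots> \<le> (fX2 r (Suc j)) * a + (fX1 r (Suc j)) * b"
      proof (rule lin_le[OF _ _ ab])
      show "r * fX2 r j \<le> fX2 r (Suc j)" using i1 i2 rpos by (simp add: defs algebra_simps power2_eq_square power3_eq_cube mult_left_mono)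
      show "r * fX1 r j + fX2 r j \<le> fX1 r (Suc j)" using i1 i2 rpos by (simp add: defs algebra_simps power2_eq_square power3_eq_cube mult_left_mono)
      qed
      also have "\<dots> \<le> Phi r (Suc j) a b" using phi_ge(2)[where r=r and j="Suc j" and a=a and b=b] by (simp add: add.commute)
      finally show ?thesis .
    qed
    show "fY1 r j * (r * a + b) + fY2 r j * (r * b) \<le> Phi r (Suc j) a b"
    proof -
      have "fY1 r j * (r * a + b) + fY2 r j * (r * b) = (r * fY1 r j) * a + (fY1 r j + r * fY2 r j) * b" by (simp add: algebra_simps)
      also have "\<dots> \<le> (fZ2 r (Suc j)) * a + (fZ1 r (Suc j)) * b"
      proof (rule lin_le[OF _ _ ab])
      show "r * fY1 r j \<le> fZ2 r (Suc j)" using i3' i4 rpos by (simp add: defs algebra_simps power2_eq_square power3_eq_cube mult_left_mono)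
      show "fY1 r j + r * fY2 r j \<le> fZ1 r (Suc j)" using i3' i4 rpos by (simp add: defs algebra_simps power2_eq_square power3_eq_cube mult_left_mono)
      qed
      also have "\<dots> \<le> Phi r (Suc j) a b" using phi_ge(6)[where r=r and j="Suc j" and a=a and b=b] by (simp add: add.commute)
      finally show ?thesis .
    qed
    show "fY1 r j * (r * b) + fY2 r j * (r * a + b) \<le> Phi r (Suc j) a b"
    proof -
      have "fY1 r j * (r * b) + fY2 r j * (r * a + b) = (r * fY2 r j) * a + (r * fY1 r j + fY2 r j) * b" by (simp add: algebra_simps)
      also have "\<dots> \<le> (fZ2 r (Suc j)) * a + (fZ1 r (Suc j)) * b"
      proof (rule lin_le[OF _ _ ab])
      show "r * fY2 r j \<le> fZ2 r (Suc j)" using i5' i6 rpos by (simp add: defs algebra_simps power2_eq_square power3_eq_cube mult_left_mono)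
      show "r * fY1 r j + fY2 r j \<le> fZ1 r (Suc j)" using i5' i6 rpos by (simp add: defs algebra_simps power2_eq_square power3_eq_cube mult_left_mono)
      qed
      also have "\<dots> \<le> Phi r (Suc j) a b" using phi_ge(6)[where r=r and j="Suc j" and a=a and b=b] by (simp add: add.commute)
      finally show ?thesis .
    qed
    show "fZ1 r j * (r * a + b) + fZ2 r j * (r * b) \<le> Phi r (Suc j) a b"
    proof -
      have "fZ1 r j * (r * a + b) + fZ2 r j * (r * b) = (r * fZ1 r j) * a + (fZ1 r j + r * fZ2 r j) * b" by (simp add: algebra_simps)
      also have "\<dots> \<le> (fZ2 r (Suc j)) * a + (fZ1 r (Suc j)) * b"
      proof (rule lin_le[OF _ _ ab])
      show "r * fZ1 r j \<le> fZ2 r (Suc j)" by (simp add: defs algebra_simps power2_eq_square power3_eq_cube)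
      show "fZ1 r j + r * fZ2 r j \<le> fZ1 r (Suc j)" by (simp add: defs algebra_simps power2_eq_square power3_eq_cube)
      qed
      also have "\<dots> \<le> Phi r (Suc j) a b" using phi_ge(6)[where r=r and j="Suc j" and a=a and b=b] by (simp add: add.commute)
      finally show ?thesis .
    qed
    show "fZ1 r j * (r * b) + fZ2 r j * (r * a + b) \<le> Phi r (Suc j) a b"
    proof -
      have "fZ1 r j * (r * b) + fZ2 r j * (r * a + b) = (r * fZ2 r j) * a + (r * fZ1 r j + fZ2 r j) * b" by (simp add: algebra_simps)
      also have "\<dots> \<le> (fX2 r (Suc j)) * a + (fX1 r (Suc j)) * b"
      proof (rule lin_le[OF _ _ ab])
      show "r * fZ2 r j \<le> fX2 r (Suc j)" by (simp add: defs algebra_simps power2_eq_square power3_eq_cube)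
      show "r * fZ1 r j + fZ2 r j \<le> fX1 r (Suc j)" by (simp add: defs algebra_simps power2_eq_square power3_eq_cube)
      qed
      also have "\<dots> \<le> Phi r (Suc j) a b" using phi_ge(2)[where r=r and j="Suc j" and a=a and b=b] by (simp add: add.commute)
      finally show ?thesis .
    qed
  qed
qed




fun Vf :: "real \<Rightarrow> nat \<Rightarrow> real \<Rightarrow> real \<Rightarrow> real" where
  "Vf r 0 a b = max a b"
| "Vf r (Suc k) a b = max (Vf r k (r*a+b) (r*b)) (Vf r k (r*a) (r*b+a))"

lemma p2: "r \<noteq> 0 \<Longrightarrow> p r 2 = 2 * r"
  by (simp add: numeral_2_eq_2 power2_eq_square)
lemma p3: "r \<noteq> 0 \<Longrightarrow> p r 3 = 2 * r + r^3"
  by (simp add: numeral_3_eq_3 power2_eq_square power3_eq_cube)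

lemma Vf3:
  assumes r: "1 \<le> r" "r \<le> 5/4" and ab: "0 \<le> a" "0 \<le> b"
  shows "Vf r 3 a b \<le> Phi r 0 a b"
proof -
  have rnz: "r \<noteq> 0" using r by auto
  have fvals: "fX1 r 0 = 3 * r^2" "fX2 r 0 = r^3" "fY1 r 0 = 1 + 2 * r^2" "fY2 r 0 = r + r^3"
     "fZ1 r 0 = 2 * r + r^3" "fZ2 r 0 = 2 * r^2"
    using rnz by (simp_all add: fX1_def fX2_def fY1_def fY2_def fZ1_def fZ2_def p2 p3
       power2_eq_square power3_eq_cube algebra_simps)
  have h0: "0 \<le> ((5) * 1 + (-4) * r)"
  proof -
    have "0 \<le> (5 - 4*r)" using r by ((intro mult_nonneg_nonneg)?; simp)
    moreover have "(5 - 4*r) = ((5) * 1 + (-4) * r)" by (simp add: algebra_simps power2_eq_square power3_eq_cube)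
    ultimately show ?thesis by linarith
  qed
  have h1: "0 \<le> ((25) * 1 + (-40) * r + (16) * r^2)"
  proof -
    have "0 \<le> (5 - 4*r) * (5 - 4*r)" using r by ((intro mult_nonneg_nonneg)?; simp)
    moreover have "(5 - 4*r) * (5 - 4*r) = ((25) * 1 + (-40) * r + (16) * r^2)" by (simp add: algebra_simps power2_eq_square power3_eq_cube)
    ultimately show ?thesis by linarith
  qed
  have h2: "0 \<le> ((125) * 1 + (-300) * r + (240) * r^2 + (-64) * r^3)"
  proof -
    have "0 \<le> (5 - 4*r) * (5 - 4*r) * (5 - 4*r)" using r by ((intro mult_nonneg_nonneg)?; simp)
    moreover have "(5 - 4*r) * (5 - 4*r) * (5 - 4*r) = ((125) * 1 + (-300) * r + (240) * r^2 + (-64) * r^3)" by (simp add: algebra_simps power2_eq_square power3_eq_cube)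
    ultimately show ?thesis by linarith
  qed
  have h3: "0 \<le> ((-1) * 1 + (1) * r)"
  proof -
    have "0 \<le> (r - 1)" using r by ((intro mult_nonneg_nonneg)?; simp)
    moreover have "(r - 1) = ((-1) * 1 + (1) * r)" by (simp add: algebra_simps power2_eq_square power3_eq_cube)
    ultimately show ?thesis by linarith
  qed
  have h4: "0 \<le> ((-5) * 1 + (9) * r + (-4) * r^2)"
  proof -
    have "0 \<le> (r - 1) * (5 - 4*r)" using r by ((intro mult_nonneg_nonneg)?; simp)
    moreover have "(r - 1) * (5 - 4*r) = ((-5) * 1 + (9) * r + (-4) * r^2)" by (simp add: algebra_simps power2_eq_square power3_eq_cube)
    ultimately show ?thesis by linarith
  qed
  have h5: "0 \<le> ((-25) * 1 + (65) * r + (-56) * r^2 + (16) * r^3)"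
  proof -
    have "0 \<le> (r - 1) * (5 - 4*r) * (5 - 4*r)" using r by ((intro mult_nonneg_nonneg)?; simp)
    moreover have "(r - 1) * (5 - 4*r) * (5 - 4*r) = ((-25) * 1 + (65) * r + (-56) * r^2 + (16) * r^3)" by (simp add: algebra_simps power2_eq_square power3_eq_cube)
    ultimately show ?thesis by linarith
  qed
  have h6: "0 \<le> ((1) * 1 + (-2) * r + (1) * r^2)"
  proof -
    have "0 \<le> (r - 1) * (r - 1)" using r by ((intro mult_nonneg_nonneg)?; simp)
    moreover have "(r - 1) * (r - 1) = ((1) * 1 + (-2) * r + (1) * r^2)" by (simp add: algebra_simps power2_eq_square power3_eq_cube)
    ultimately show ?thesis by linarith
  qed
  have h7: "0 \<le> ((5) * 1 + (-14) * r + (13) * r^2 + (-4) * r^3)"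
  proof -
    have "0 \<le> (r - 1) * (r - 1) * (5 - 4*r)" using r by ((intro mult_nonneg_nonneg)?; simp)
    moreover have "(r - 1) * (r - 1) * (5 - 4*r) = ((5) * 1 + (-14) * r + (13) * r^2 + (-4) * r^3)" by (simp add: algebra_simps power2_eq_square power3_eq_cube)
    ultimately show ?thesis by linarith
  qed
  have h8: "0 \<le> ((-1) * 1 + (3) * r + (-3) * r^2 + (1) * r^3)"
  proof -
    have "0 \<le> (r - 1) * (r - 1) * (r - 1)" using r by ((intro mult_nonneg_nonneg)?; simp)
    moreover have "(r - 1) * (r - 1) * (r - 1) = ((-1) * 1 + (3) * r + (-3) * r^2 + (1) * r^3)" by (simp add: algebra_simps power2_eq_square power3_eq_cube)
    ultimately show ?thesis by linarith
  qed
  note H = h0 h1 h2 h3 h4 h5 h6 h7 h8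
  have l1: "r * (r * (r * (a) + (b)) + (r * (b))) + (r * (r * (b))) \<le> Phi r 0 a b"
  proof -
    have "r * (r * (r * (a) + (b)) + (r * (b))) + (r * (r * (b))) = ((1) * r^3) * a + ((3) * r^2) * b" by (simp add: algebra_simps power2_eq_square power3_eq_cube)
    also have "\<dots> \<le> ((1) * r^3) * a + ((3) * r^2) * b"
    proof (rule lin_le[OF _ _ ab])
      show "((1) * r^3) \<le> ((1) * r^3)" using H r by linarith
      show "((3) * r^2) \<le> ((3) * r^2)" using H r by linarith
    qed
    also have "\<dots> \<le> Phi r 0 a b" using phi_ge(2)[where r=r and j=0 and a=a and b=b] r
      by (simp add: fvals algebra_simps power2_eq_square power3_eq_cube)
    finally show ?thesis .
  qed
  have l2: "r * (r * (r * (b))) \<le> Phi r 0 a b"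
  proof -
    have "r * (r * (r * (b))) = 0 * a + ((1) * r^3) * b" by (simp add: algebra_simps power2_eq_square power3_eq_cube)
    also have "\<dots> \<le> ((3) * r^2) * a + ((1) * r^3) * b"
    proof (rule lin_le[OF _ _ ab])
      show "0 \<le> ((3) * r^2)" using H r by linarith
      show "((1) * r^3) \<le> ((1) * r^3)" using H r by linarith
    qed
    also have "\<dots> \<le> Phi r 0 a b" using phi_ge(1)[where r=r and j=0 and a=a and b=b] r
      by (simp add: fvals algebra_simps power2_eq_square power3_eq_cube)
    finally show ?thesis .
  qed
  have l3: "r * (r * (r * (a) + (b)) + (r * (b))) \<le> Phi r 0 a b"
  proof -
    have "r * (r * (r * (a) + (b)) + (r * (b))) = ((1) * r^3) * a + ((2) * r^2) * b" by (simp add: algebra_simps power2_eq_square power3_eq_cube)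
    also have "\<dots> \<le> ((1) * r^3) * a + ((3) * r^2) * b"
    proof (rule lin_le[OF _ _ ab])
      show "((1) * r^3) \<le> ((1) * r^3)" using H r by linarith
      show "((2) * r^2) \<le> ((3) * r^2)" using H r by linarith
    qed
    also have "\<dots> \<le> Phi r 0 a b" using phi_ge(2)[where r=r and j=0 and a=a and b=b] r
      by (simp add: fvals algebra_simps power2_eq_square power3_eq_cube)
    finally show ?thesis .
  qed
  have l4: "r * (r * (r * (b))) + (r * (r * (a) + (b)) + (r * (b))) \<le> Phi r 0 a b"
  proof -
    have "r * (r * (r * (b))) + (r * (r * (a) + (b)) + (r * (b))) = ((1) * r^2) * a + ((2) * r + (1) * r^3) * b" by (simp add: algebra_simps power2_eq_square power3_eq_cube)
    also have "\<dots> \<le> ((2) * r^2) * a + ((2) * r + (1) * r^3) * b"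
    proof (rule lin_le[OF _ _ ab])
      show "((1) * r^2) \<le> ((2) * r^2)" using H r by linarith
      show "((2) * r + (1) * r^3) \<le> ((2) * r + (1) * r^3)" using H r by linarith
    qed
    also have "\<dots> \<le> Phi r 0 a b" using phi_ge(6)[where r=r and j=0 and a=a and b=b] r
      by (simp add: fvals algebra_simps power2_eq_square power3_eq_cube)
    finally show ?thesis .
  qed
  have l5: "r * (r * (r * (a) + (b))) + (r * (r * (b)) + (r * (a) + (b))) \<le> Phi r 0 a b"
  proof -
    have "r * (r * (r * (a) + (b))) + (r * (r * (b)) + (r * (a) + (b))) = ((1) * r + (1) * r^3) * a + ((1) * 1 + (2) * r^2) * b" by (simp add: algebra_simps power2_eq_square power3_eq_cube)
    also have "\<dots> \<le> ((1) * r + (1) * r^3) * a + ((1) * 1 + (2) * r^2) * b"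
    proof (rule lin_le[OF _ _ ab])
      show "((1) * r + (1) * r^3) \<le> ((1) * r + (1) * r^3)" using H r by linarith
      show "((1) * 1 + (2) * r^2) \<le> ((1) * 1 + (2) * r^2)" using H r by linarith
    qed
    also have "\<dots> \<le> Phi r 0 a b" using phi_ge(4)[where r=r and j=0 and a=a and b=b] r
      by (simp add: fvals algebra_simps power2_eq_square power3_eq_cube)
    finally show ?thesis .
  qed
  have l6: "r * (r * (r * (b)) + (r * (a) + (b))) \<le> Phi r 0 a b"
  proof -
    have "r * (r * (r * (b)) + (r * (a) + (b))) = ((1) * r^2) * a + ((1) * r + (1) * r^3) * b" by (simp add: algebra_simps power2_eq_square power3_eq_cube)
    also have "\<dots> \<le> ((1) * 1 + (2) * r^2) * a + ((1) * r + (1) * r^3) * b"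
    proof (rule lin_le[OF _ _ ab])
      show "((1) * r^2) \<le> ((1) * 1 + (2) * r^2)" using H r by linarith
      show "((1) * r + (1) * r^3) \<le> ((1) * r + (1) * r^3)" using H r by linarith
    qed
    also have "\<dots> \<le> Phi r 0 a b" using phi_ge(3)[where r=r and j=0 and a=a and b=b] r
      by (simp add: fvals algebra_simps power2_eq_square power3_eq_cube)
    finally show ?thesis .
  qed
  have l7: "r * (r * (r * (a) + (b))) \<le> Phi r 0 a b"
  proof -
    have "r * (r * (r * (a) + (b))) = ((1) * r^3) * a + ((1) * r^2) * b" by (simp add: algebra_simps power2_eq_square power3_eq_cube)
    also have "\<dots> \<le> ((1) * r^3) * a + ((3) * r^2) * b"
    proof (rule lin_le[OF _ _ ab])
      show "((1) * r^3) \<le> ((1) * r^3)" using H r by linarith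
      show "((1) * r^2) \<le> ((3) * r^2)" using H r by linarith
    qed
    also have "\<dots> \<le> Phi r 0 a b" using phi_ge(2)[where r=r and j=0 and a=a and b=b] r
      by (simp add: fvals algebra_simps power2_eq_square power3_eq_cube)
    finally show ?thesis .
  qed
  have l8: "r * (r * (r * (b)) + (r * (a) + (b))) + (r * (r * (a) + (b))) \<le> Phi r 0 a b"
  proof -
    have "r * (r * (r * (b)) + (r * (a) + (b))) + (r * (r * (a) + (b))) = ((2) * r^2) * a + ((2) * r + (1) * r^3) * b" by (simp add: algebra_simps power2_eq_square power3_eq_cube)
    also have "\<dots> \<le> ((2) * r^2) * a + ((2) * r + (1) * r^3) * b"
    proof (rule lin_le[OF _ _ ab])
      show "((2) * r^2) \<le> ((2) * r^2)" using H r by linarith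
      show "((2) * r + (1) * r^3) \<le> ((2) * r + (1) * r^3)" using H r by linarith
    qed
    also have "\<dots> \<le> Phi r 0 a b" using phi_ge(6)[where r=r and j=0 and a=a and b=b] r
      by (simp add: fvals algebra_simps power2_eq_square power3_eq_cube)
    finally show ?thesis .
  qed
  have l9: "r * (r * (r * (a)) + (r * (b) + (a))) + (r * (r * (b) + (a))) \<le> Phi r 0 a b"
  proof -
    have "r * (r * (r * (a)) + (r * (b) + (a))) + (r * (r * (b) + (a))) = ((2) * r + (1) * r^3) * a + ((2) * r^2) * b" by (simp add: algebra_simps power2_eq_square power3_eq_cube)
    also have "\<dots> \<le> ((2) * r + (1) * r^3) * a + ((2) * r^2) * b"
    proof (rule lin_le[OF _ _ ab])
      show "((2) * r + (1) * r^3) \<le> ((2) * r + (1) * r^3)" using H r by linarith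
      show "((2) * r^2) \<le> ((2) * r^2)" using H r by linarith
    qed
    also have "\<dots> \<le> Phi r 0 a b" using phi_ge(5)[where r=r and j=0 and a=a and b=b] r
      by (simp add: fvals algebra_simps power2_eq_square power3_eq_cube)
    finally show ?thesis .
  qed
  have l10: "r * (r * (r * (b) + (a))) \<le> Phi r 0 a b"
  proof -
    have "r * (r * (r * (b) + (a))) = ((1) * r^2) * a + ((1) * r^3) * b" by (simp add: algebra_simps power2_eq_square power3_eq_cube)
    also have "\<dots> \<le> ((3) * r^2) * a + ((1) * r^3) * b"
    proof (rule lin_le[OF _ _ ab])
      show "((1) * r^2) \<le> ((3) * r^2)" using H r by linarith
      show "((1) * r^3) \<le> ((1) * r^3)" using H r by linarith
    qed
    also have "\<dots> \<le> Phi r 0 a b" using phi_ge(1)[where r=r and j=0 and a=a and b=b] r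
      by (simp add: fvals algebra_simps power2_eq_square power3_eq_cube)
    finally show ?thesis .
  qed
  have l11: "r * (r * (r * (a)) + (r * (b) + (a))) \<le> Phi r 0 a b"
  proof -
    have "r * (r * (r * (a)) + (r * (b) + (a))) = ((1) * r + (1) * r^3) * a + ((1) * r^2) * b" by (simp add: algebra_simps power2_eq_square power3_eq_cube)
    also have "\<dots> \<le> ((1) * r + (1) * r^3) * a + ((1) * 1 + (2) * r^2) * b"
    proof (rule lin_le[OF _ _ ab])
      show "((1) * r + (1) * r^3) \<le> ((1) * r + (1) * r^3)" using H r by linarith
      show "((1) * r^2) \<le> ((1) * 1 + (2) * r^2)" using H r by linarith
    qed
    also have "\<dots> \<le> Phi r 0 a b" using phi_ge(4)[where r=r and j=0 and a=a and b=b] r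
      by (simp add: fvals algebra_simps power2_eq_square power3_eq_cube)
    finally show ?thesis .
  qed
  have l12: "r * (r * (r * (b) + (a))) + (r * (r * (a)) + (r * (b) + (a))) \<le> Phi r 0 a b"
  proof -
    have "r * (r * (r * (b) + (a))) + (r * (r * (a)) + (r * (b) + (a))) = ((1) * 1 + (2) * r^2) * a + ((1) * r + (1) * r^3) * b" by (simp add: algebra_simps power2_eq_square power3_eq_cube)
    also have "\<dots> \<le> ((1) * 1 + (2) * r^2) * a + ((1) * r + (1) * r^3) * b"
    proof (rule lin_le[OF _ _ ab])
      show "((1) * 1 + (2) * r^2) \<le> ((1) * 1 + (2) * r^2)" using H r by linarith
      show "((1) * r + (1) * r^3) \<le> ((1) * r + (1) * r^3)" using H r by linarith
    qed
    also have "\<dots> \<le> Phi r 0 a b" using phi_ge(3)[where r=r and j=0 and a=a and b=b] r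
      by (simp add: fvals algebra_simps power2_eq_square power3_eq_cube)
    finally show ?thesis .
  qed
  have l13: "r * (r * (r * (a))) + (r * (r * (b) + (a)) + (r * (a))) \<le> Phi r 0 a b"
  proof -
    have "r * (r * (r * (a))) + (r * (r * (b) + (a)) + (r * (a))) = ((2) * r + (1) * r^3) * a + ((1) * r^2) * b" by (simp add: algebra_simps power2_eq_square power3_eq_cube)
    also have "\<dots> \<le> ((2) * r + (1) * r^3) * a + ((2) * r^2) * b"
    proof (rule lin_le[OF _ _ ab])
      show "((2) * r + (1) * r^3) \<le> ((2) * r + (1) * r^3)" using H r by linarith
      show "((1) * r^2) \<le> ((2) * r^2)" using H r by linarith
    qed
    also have "\<dots> \<le> Phi r 0 a b" using phi_ge(5)[where r=r and j=0 and a=a and b=b] r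
      by (simp add: fvals algebra_simps power2_eq_square power3_eq_cube)
    finally show ?thesis .
  qed
  have l14: "r * (r * (r * (b) + (a)) + (r * (a))) \<le> Phi r 0 a b"
  proof -
    have "r * (r * (r * (b) + (a)) + (r * (a))) = ((2) * r^2) * a + ((1) * r^3) * b" by (simp add: algebra_simps power2_eq_square power3_eq_cube)
    also have "\<dots> \<le> ((3) * r^2) * a + ((1) * r^3) * b"
    proof (rule lin_le[OF _ _ ab])
      show "((2) * r^2) \<le> ((3) * r^2)" using H r by linarith
      show "((1) * r^3) \<le> ((1) * r^3)" using H r by linarith
    qed
    also have "\<dots> \<le> Phi r 0 a b" using phi_ge(1)[where r=r and j=0 and a=a and b=b] r
      by (simp add: fvals algebra_simps power2_eq_square power3_eq_cube)
    finally show ?thesis .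
  qed
  have l15: "r * (r * (r * (a))) \<le> Phi r 0 a b"
  proof -
    have "r * (r * (r * (a))) = ((1) * r^3) * a + 0 * b" by (simp add: algebra_simps power2_eq_square power3_eq_cube)
    also have "\<dots> \<le> ((1) * r^3) * a + ((3) * r^2) * b"
    proof (rule lin_le[OF _ _ ab])
      show "((1) * r^3) \<le> ((1) * r^3)" using H r by linarith
      show "0 \<le> ((3) * r^2)" using H r by linarith
    qed
    also have "\<dots> \<le> Phi r 0 a b" using phi_ge(2)[where r=r and j=0 and a=a and b=b] r
      by (simp add: fvals algebra_simps power2_eq_square power3_eq_cube)
    finally show ?thesis .
  qed
  have l16: "r * (r * (r * (b) + (a)) + (r * (a))) + (r * (r * (a))) \<le> Phi r 0 a b"
  proof -
    have "r * (r * (r * (b) + (a)) + (r * (a))) + (r * (r * (a))) = ((3) * r^2) * a + ((1) * r^3) * b" by (simp add: algebra_simps power2_eq_square power3_eq_cube)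
    also have "\<dots> \<le> ((3) * r^2) * a + ((1) * r^3) * b"
    proof (rule lin_le[OF _ _ ab])
      show "((3) * r^2) \<le> ((3) * r^2)" using H r by linarith
      show "((1) * r^3) \<le> ((1) * r^3)" using H r by linarith
    qed
    also have "\<dots> \<le> Phi r 0 a b" using phi_ge(1)[where r=r and j=0 and a=a and b=b] r
      by (simp add: fvals algebra_simps power2_eq_square power3_eq_cube)
    finally show ?thesis .
  qed
  show ?thesis using l1 l2 l3 l4 l5 l6 l7 l8 l9 l10 l11 l12 l13 l14 l15 l16 by (simp only: numeral_3_eq_3 Vf.simps max.bounded_iff; blast)

qed




definition hf :: "real \<Rightarrow> (nat \<Rightarrow> nat \<Rightarrow> real) \<Rightarrow> nat \<Rightarrow> nat \<Rightarrow> real" where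
  "hf s a i j = (if i = Suc j then s else if Suc j < i then 0 else a i j)"

definition Pm :: "real \<Rightarrow> (nat \<Rightarrow> nat \<Rightarrow> real) \<Rightarrow> nat \<Rightarrow> real" where
  "Pm s a k = det (mat k k (\<lambda>(i,j). hf s a i j))"

lemma col_rep:
  "det (mat (Suc m) (Suc m) (\<lambda>(i,l). if l = m then c i else hf s a i l))
     = (\<Sum>i\<le>m. (-s)^(m-i) * c i * Pm s a i)"
proof (induction m arbitrary: c)
  case 0
  let ?M = "mat (Suc 0) (Suc 0) (\<lambda>(i,l). if l = 0 then c i else hf s a i l)"
  have car: "?M \<in> carrier_mat (Suc 0) (Suc 0)" by simp
  have "det ?M = (\<Sum>j<Suc 0. ?M $$ (0,j) * cofactor ?M 0 j)"
    by (rule laplace_expansion_row[OF car]) simp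
  also have "\<dots> = c 0 * det (mat_delete ?M 0 0)" by (simp add: cofactor_def)
  also have "mat_delete ?M 0 0 = mat 0 0 (\<lambda>(i,j). hf s a i j)"
    by (rule eq_matI) (auto simp: mat_delete_def)
  finally show ?case by (simp add: Pm_def)
next
  case (Suc m)
  let ?M = "mat (Suc (Suc m)) (Suc (Suc m)) (\<lambda>(i,l). if l = Suc m then c i else hf s a i l)"
  have car: "?M \<in> carrier_mat (Suc (Suc m)) (Suc (Suc m))" by simp
  have "det ?M = (\<Sum>j<Suc (Suc m). ?M $$ (Suc m,j) * cofactor ?M (Suc m) j)"
    by (rule laplace_expansion_row[OF car]) simp
  also have "\<dots> = (\<Sum>j<m. ?M $$ (Suc m,j) * cofactor ?M (Suc m) j)
      + ?M $$ (Suc m, m) * cofactor ?M (Suc m) m + ?M $$ (Suc m, Suc m) * cofactor ?M (Suc m) (Suc m)"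
    by simp
  also have "(\<Sum>j<m. ?M $$ (Suc m,j) * cofactor ?M (Suc m) j) = 0"
    by (rule sum.neutral) (auto simp: hf_def)
  also have "?M $$ (Suc m, m) = s" by (simp add: hf_def)
  also have "?M $$ (Suc m, Suc m) = c (Suc m)" by simp
  also have "cofactor ?M (Suc m) (Suc m) = Pm s a (Suc m)"
  proof -
    have "mat_delete ?M (Suc m) (Suc m) = mat (Suc m) (Suc m) (\<lambda>(i,j). hf s a i j)"
      by (rule eq_matI) (auto simp: mat_delete_def)
    thus ?thesis by (simp add: cofactor_def Pm_def)
  qed
  also have "cofactor ?M (Suc m) m = - (\<Sum>i\<le>m. (-s)^(m-i) * c i * Pm s a i)"
  proof -
    have "mat_delete ?M (Suc m) m = mat (Suc m) (Suc m) (\<lambda>(i,l). if l = m then c i else hf s a i l)"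
      by (rule eq_matI) (auto simp: mat_delete_def)
    thus ?thesis using Suc.IH[of c] by (simp add: cofactor_def)
  qed
  finally have "det ?M = s * - (\<Sum>i\<le>m. (-s)^(m-i) * c i * Pm s a i) + c (Suc m) * Pm s a (Suc m)"
    by simp
  also have "s * - (\<Sum>i\<le>m. (-s)^(m-i) * c i * Pm s a i) = (\<Sum>i\<le>m. (-s)^(Suc m-i) * c i * Pm s a i)"
    by (simp add: sum_distrib_left Suc_diff_le algebra_simps sum_negf[symmetric])
  finally show ?case by simp
qed

lemma Pm_rec: "Pm s a (Suc m) = (\<Sum>i\<le>m. (-s)^(m-i) * a i m * Pm s a i)"
proof -
  have "Pm s a (Suc m) = det (mat (Suc m) (Suc m) (\<lambda>(i,l). if l = m then hf s a i m else hf s a i l))"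
    unfolding Pm_def by (rule arg_cong[where f=det]) (rule eq_matI, auto)
  also have "\<dots> = (\<Sum>i\<le>m. (-s)^(m-i) * hf s a i m * Pm s a i)" by (rule col_rep)
  also have "\<dots> = (\<Sum>i\<le>m. (-s)^(m-i) * a i m * Pm s a i)"
    by (rule sum.cong) (auto simp: hf_def)
  finally show ?thesis .
qed

lemma Pm_0: "Pm s a 0 = 1"
proof -
  have "mat 0 0 (\<lambda>(i,j). hf s a i j) = (1\<^sub>m 0 :: real mat)" by (rule eq_matI) auto
  thus ?thesis by (simp add: Pm_def)
qed

definition uu :: "real \<Rightarrow> (nat \<Rightarrow> nat \<Rightarrow> real) \<Rightarrow> nat \<Rightarrow> real" where
  "uu s a k = (-1)^k * Pm s a k"

lemma sign_aux: "i \<le> m \<Longrightarrow> (-1::real)^(Suc m) * (-1)^(m-i) = - ((-1)^i)"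
proof -
  assume "i \<le> m"
  then obtain d where m: "m = i + d" using le_Suc_ex by blast
  have "(-1::real)^(Suc m) * (-1)^(m-i) = (-1)^i * ((-1)^d * (-1)^d) * (-1)"
    unfolding m by (simp add: power_add algebra_simps)
  also have "(-1::real)^d * (-1)^d = 1" by (simp add: power_add[symmetric] flip: mult_2)
  finally show ?thesis by simp
qed

lemma uu_rec: "uu s a (Suc m) = - (\<Sum>i\<le>m. s^(m-i) * a i m * uu s a i)"
proof -
  have "uu s a (Suc m) = (\<Sum>i\<le>m. (-1)^(Suc m) * ((-s)^(m-i) * a i m * Pm s a i))"
    unfolding uu_def Pm_rec by (simp add: sum_distrib_left)
  also have "\<dots> = (\<Sum>i\<le>m. - (s^(m-i) * a i m * uu s a i))"
  proof (rule sum.cong[OF refl])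
    fix i assume "i \<in> {..m}"
    hence im: "i \<le> m" by simp
    have "(-1::real)^(Suc m) * ((-s)^(m-i) * a i m * Pm s a i)
        = ((-1)^(Suc m) * (-1)^(m-i)) * (s^(m-i) * a i m * Pm s a i)"
      by (simp add: power_minus[of s] algebra_simps)
    also have "\<dots> = - (s^(m-i) * a i m * uu s a i)"
      unfolding sign_aux[OF im] uu_def by (simp add: algebra_simps)
    finally show "(-1::real)^(Suc m) * ((-s)^(m-i) * a i m * Pm s a i) = - (s^(m-i) * a i m * uu s a i)" .
  qed
  also have "\<dots> = - (\<Sum>i\<le>m. s^(m-i) * a i m * uu s a i)" by (simp add: sum_negf)
  finally show ?thesis .
qed

definition "alp s a m = (\<Sum>i\<le>m. s^(m-i) * max (uu s a i) 0)"
definition "bet s a m = (\<Sum>i\<le>m. s^(m-i) * max (- uu s a i) 0)"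

lemma alp_Suc: "alp s a (Suc m) = s * alp s a m + max (uu s a (Suc m)) 0"
  unfolding alp_def by (simp add: sum_distrib_left Suc_diff_le algebra_simps)
lemma bet_Suc: "bet s a (Suc m) = s * bet s a m + max (- uu s a (Suc m)) 0"
  unfolding bet_def by (simp add: sum_distrib_left Suc_diff_le algebra_simps)
lemma alp_0: "alp s a 0 = 1" unfolding alp_def uu_def by (simp add: Pm_0)
lemma bet_0: "bet s a 0 = 0" unfolding bet_def uu_def by (simp add: Pm_0)

lemma term_aux:
  assumes "0 \<le> (x::real)" "x \<le> 1"
  shows "- (x * u) \<le> max (- u) 0" "- max u 0 \<le> - (x * u)"
proof -
  show "- (x * u) \<le> max (- u) 0"
  proof (cases "0 \<le> u")
    case True thus ?thesis using assms by (simp add: mult_nonneg_nonneg)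
  next
    case False
    have "x * (-u) \<le> 1 * (-u)" using False assms by (intro mult_right_mono) auto
    thus ?thesis by simp
  qed
  show "- max u 0 \<le> - (x * u)"
  proof (cases "0 \<le> u")
    case True
    have "x * u \<le> 1 * u" using True assms by (intro mult_right_mono) auto
    thus ?thesis using True by simp
  next
    case False thus ?thesis using assms by (simp add: mult_nonneg_nonpos)
  qed
qed

lemma uu_bounds:
  assumes s: "0 \<le> s" and a: "\<And>i. i \<le> m \<Longrightarrow> 0 \<le> a i m \<and> a i m \<le> 1"
  shows "- alp s a m \<le> uu s a (Suc m)" "uu s a (Suc m) \<le> bet s a m"
proof -
  have eq: "uu s a (Suc m) = (\<Sum>i\<le>m. s^(m-i) * (- (a i m * uu s a i)))"
    unfolding uu_rec by (simp add: sum_negf mult.assoc)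
  show "uu s a (Suc m) \<le> bet s a m"
    unfolding eq bet_def
    by (rule sum_mono, rule mult_left_mono) (use term_aux a s in auto)
  have "- alp s a m = (\<Sum>i\<le>m. s^(m-i) * (- max (uu s a i) 0))"
    unfolding alp_def by (simp add: sum_negf)
  also have "\<dots> \<le> uu s a (Suc m)"
    unfolding eq
    by (rule sum_mono, rule mult_left_mono) (use term_aux a s in auto)
  finally show "- alp s a m \<le> uu s a (Suc m)" .
qed




lemma Vf_mono: "0 \<le> r \<Longrightarrow> a \<le> a' \<Longrightarrow> b \<le> b' \<Longrightarrow> Vf r k a b \<le> Vf r k a' b'"
proof (induction k arbitrary: a b a' b')
  case 0 show ?case unfolding Vf.simps by (rule max.mono[OF 0(2) 0(3)])
next
  case (Suc k)
  have h1: "r*a+b \<le> r*a'+b'" "r*b \<le> r*b'" "r*a \<le> r*a'" "r*b+a \<le> r*b'+a'"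
    using Suc.prems by (auto intro!: add_mono mult_left_mono)
  show ?case unfolding Vf.simps by (rule max.mono[OF Suc.IH[OF Suc.prems(1) h1(1,2)] Suc.IH[OF Suc.prems(1) h1(3,4)]])
qed

lemma Vf_le_Phi:
  assumes r: "1 \<le> r" "r \<le> 5/4"
  shows "0 \<le> a \<Longrightarrow> 0 \<le> b \<Longrightarrow> Vf r (j+3) a b \<le> Phi r j a b"
proof (induction j arbitrary: a b)
  case 0 thus ?case using Vf3[OF r] by simp
next
  case (Suc j)
  have nn: "0 \<le> r*a+b" "0 \<le> r*b" "0 \<le> r*a" "0 \<le> r*b+a" using Suc.prems r by auto
  have "Vf r (Suc j + 3) a b = max (Vf r (j+3) (r*a+b) (r*b)) (Vf r (j+3) (r*a) (r*b+a))" by (simp only: add_Suc Vf.simps)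
  also have "\<dots> \<le> max (Phi r j (r*a+b) (r*b)) (Phi r j (r*a) (r*b+a))"
    using Suc.IH[OF nn(1,2)] Suc.IH[OF nn(3,4)] by (rule max.mono)
  also have "\<dots> \<le> Phi r (Suc j) a b"
  proof (rule max.boundedI)
    show "Phi r j (r*a+b) (r*b) \<le> Phi r (Suc j) a b" by (rule Phi_stepL[OF r Suc.prems])
    have "Phi r j (r*a) (r*b+a) = Phi r j (r*b+a) (r*a)" by (rule Phi_sym)
    also have "\<dots> \<le> Phi r (Suc j) b a" by (rule Phi_stepL[OF r Suc.prems(2,1)])
    also have "\<dots> = Phi r (Suc j) a b" by (rule Phi_sym)
    finally show "Phi r j (r*a) (r*b+a) \<le> Phi r (Suc j) a b" .
  qed
  finally show ?case .
qed

lemma Phi_10: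
  assumes r: "1 \<le> r" "r \<le> 5/4"
  shows "Phi r j 1 0 \<le> fX1 r j"
proof -
  define P0 where "P0 = p r j"
  define P1 where "P1 = p r (j+1)"
  have P2: "p r (j+2) = P1 + r^2 * P0" unfolding P0_def P1_def by (simp add: numeral_2_eq_2)
  have P3: "p r (j+3) = (P1 + r^2 * P0) + r^2 * P1" unfolding P0_def P1_def
    by (simp add: numeral_3_eq_3 numeral_2_eq_2)
  have pos: "0 < P0" "0 < P1" unfolding P0_def P1_def using p_pos[OF r] by auto
  have lo: "r * P0 \<le> P1" unfolding P0_def P1_def using p_lo1[OF r, of j] by simp
  have lo3: "r * P1 \<le> P1 + r^2 * P0" using p_lo2[OF r, of j] unfolding P0_def P1_def by simp
  have x1: "fX1 r j = r * (P1 + r^2 * P0) + r * P1" unfolding fX1_def P2 P1_def by simp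
  have x2: "fX2 r j = r^2 * P1" unfolding fX2_def P1_def by simp
  have y1: "fY1 r j = r * P1 + (r + r^3) * P0" unfolding fY1_def P1_def P0_def by simp
  have y2: "fY2 r j = r^2 * P1 + r^2 * P0" unfolding fY2_def P1_def P0_def by simp
  have z1: "fZ1 r j = (P1 + r^2 * P0) + r^2 * P1" unfolding fZ1_def P3 by simp
  have z2: "fZ2 r j = r * (P1 + r^2 * P0)" unfolding fZ2_def P2 by simp
  have rp: "0 \<le> r" "0 \<le> r - 1" "0 \<le> 2 - r" using r by auto
  have "fX2 r j \<le> fX1 r j"
  proof -
    have "r * (r * P1) \<le> r * (P1 + r^2 * P0)" using lo3 rp by (intro mult_left_mono) auto
    moreover have "0 \<le> r * P1" using pos rp by simp
    ultimately show ?thesis unfolding x1 x2 by (simp add: power2_eq_square algebra_simps)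
  qed
  moreover have "fY1 r j \<le> fX1 r j"
  proof -
    have "P0 \<le> r * P0" using pos r by simp
    hence "r * P0 \<le> r * P1" using lo rp by (intro mult_left_mono) auto
    thus ?thesis unfolding x1 y1 by (simp add: power2_eq_square power3_eq_cube algebra_simps)
  qed
  moreover have "fY2 r j \<le> fX1 r j"
  proof -
    have "0 \<le> (r * (2 - r)) * P1" using rp pos by simp
    moreover have "0 \<le> (r * r * (r - 1)) * P0" using rp pos by simp
    ultimately show ?thesis unfolding x1 y2 by (simp add: power2_eq_square power3_eq_cube algebra_simps)
  qed
  moreover have "fZ1 r j \<le> fX1 r j"
  proof -
    have "0 \<le> (r - 1) * ((P1 + r^2 * P0) - r * P1)" using rp lo3 by simp
    thus ?thesis unfolding x1 z1 by (simp add: power2_eq_square power3_eq_cube algebra_simps)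
  qed
  moreover have "fZ2 r j \<le> fX1 r j" unfolding x1 z2 using pos rp by simp
  moreover have "0 \<le> fX2 r j" unfolding x2 using pos by simp
  ultimately show ?thesis unfolding Phi_def by simp
qed

lemma chain:
  assumes s: "0 \<le> s" and ab: "\<And>i m. i \<le> m \<Longrightarrow> m < N \<Longrightarrow> 0 \<le> a i m \<and> a i m \<le> 1"
  shows "d + j = m \<Longrightarrow> m < N \<Longrightarrow> max (alp s a m) (bet s a m) \<le> Vf s d (alp s a j) (bet s a j)"
proof (induction d arbitrary: j)
  case 0 thus ?case by simp
next
  case (Suc d)
  have IH: "max (alp s a m) (bet s a m) \<le> Vf s d (alp s a (Suc j)) (bet s a (Suc j))"
    using Suc.IH[of "Suc j"] Suc.prems by simp
  have jN: "j < N" using Suc.prems by simp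
  have bnd: "- alp s a j \<le> uu s a (Suc j)" "uu s a (Suc j) \<le> bet s a j"
    using uu_bounds[OF s, of j a] ab jN by auto
  show ?case
  proof (cases "0 \<le> uu s a (Suc j)")
    case True
    have "alp s a (Suc j) \<le> s * alp s a j + bet s a j" "bet s a (Suc j) \<le> s * bet s a j"
      using True bnd by (simp_all add: alp_Suc bet_Suc)
    hence "Vf s d (alp s a (Suc j)) (bet s a (Suc j)) \<le> Vf s d (s * alp s a j + bet s a j) (s * bet s a j)"
      by (intro Vf_mono s)
    also have "\<dots> \<le> Vf s (Suc d) (alp s a j) (bet s a j)" by simp
    finally show ?thesis using IH by linarith
  next
    case False
    have "alp s a (Suc j) \<le> s * alp s a j" "bet s a (Suc j) \<le> s * bet s a j + alp s a j"
      using False bnd by (simp_all add: alp_Suc bet_Suc)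
    hence "Vf s d (alp s a (Suc j)) (bet s a (Suc j)) \<le> Vf s d (s * alp s a j) (s * bet s a j + alp s a j)"
      by (intro Vf_mono s)
    also have "\<dots> \<le> Vf s (Suc d) (alp s a j) (bet s a j)" by simp
    finally show ?thesis using IH by linarith
  qed
qed

lemma hess_eq:
  assumes B: "B \<in> hess_set s n P"
  shows "B = mat n n (\<lambda>(i,j). hf s (\<lambda>i j. B $$ (i,j)) i j)"
  using B unfolding hess_set_def
  by (intro eq_matI) (auto simp: hf_def)

lemma upper_bound:
  assumes r: "1 \<le> s" "s \<le> 5/4" and n: "4 \<le> n" and B: "B \<in> hess_set s n {0..1}"
  shows "\<bar>det B\<bar> \<le> fX1 s (n-4)"
proof -
  define a where "a = (\<lambda>i j. B $$ (i,j))"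
  have detB: "det B = Pm s a n" unfolding Pm_def a_def using hess_eq[OF B] by simp
  have ab: "\<And>i m. i \<le> m \<Longrightarrow> m < n \<Longrightarrow> 0 \<le> a i m \<and> a i m \<le> 1"
    using B unfolding hess_set_def a_def by auto
  obtain m where m: "n = Suc m" using n by (cases n) auto
  have s0: "0 \<le> s" using r by simp
  have "\<bar>det B\<bar> = \<bar>uu s a (Suc m)\<bar>" unfolding detB uu_def m by (simp add: abs_mult)
  also have "\<dots> \<le> max (alp s a m) (bet s a m)"
    using uu_bounds[OF s0, of m a] ab m by (auto simp: abs_le_iff)
  also have "\<dots> \<le> Vf s m (alp s a 0) (bet s a 0)"
    by (rule chain[OF s0 ab]) (use m in auto)
  also have "\<dots> = Vf s ((n-4)+3) 1 0" using m n by (simp add: alp_0 bet_0)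
  also have "\<dots> \<le> Phi s (n-4) 1 0" by (rule Vf_le_Phi[OF r]) auto
  also have "\<dots> \<le> fX1 s (n-4)" by (rule Phi_10[OF r])
  finally show ?thesis .
qed




definition tb :: "nat \<Rightarrow> bool" where "tb k = (k = 0 \<or> (3 \<le> k \<and> odd k))"
definition ty :: "nat \<Rightarrow> nat \<Rightarrow> bool" where
  "ty n k = (if k \<le> n - 2 then tb k else if k = n - 1 then tb (n-2) else \<not> tb (n-2))"
definition ea :: "nat \<Rightarrow> nat \<Rightarrow> nat \<Rightarrow> real" where
  "ea n i j = (if ty n i \<noteq> ty n (Suc j) then 1 else 0)"

lemma tb_odd: "2 \<le> k \<Longrightarrow> tb k = odd k"
  unfolding tb_def by (cases "k = 2") auto

lemma sign_inv:
  assumes s: "1 \<le> s" and n: "4 \<le> n"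
  shows "k \<le> n \<Longrightarrow> (ty n k \<longrightarrow> 0 < uu s (ea n) k) \<and> (\<not> ty n k \<longrightarrow> uu s (ea n) k < 0)
     \<and> (0 < k \<longrightarrow> uu s (ea n) k = (if ty n k then bet s (ea n) (k-1) else - alp s (ea n) (k-1)))"
proof (induction k rule: less_induct)
  case (less k)
  let ?u = "uu s (ea n)"
  show ?case
  proof (cases k)
    case 0
    have "ty n 0" unfolding ty_def tb_def by simp
    moreover have "?u 0 = 1" unfolding uu_def by (simp add: Pm_0)
    ultimately show ?thesis using 0 by simp
  next
    case (Suc m)
    have IH: "\<And>i. i \<le> m \<Longrightarrow> (ty n i \<longrightarrow> 0 < ?u i) \<and> (\<not> ty n i \<longrightarrow> ?u i < 0)"
      using less.IH less.prems Suc by auto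
    have s0: "0 \<le> s" using s by simp
    have ty1: "\<not> ty n 1" unfolding ty_def tb_def using n by auto
    show ?thesis
    proof (cases "ty n (Suc m)")
      case True
      have "?u (Suc m) = (\<Sum>i\<le>m. s^(m-i) * max (- ?u i) 0)"
        unfolding uu_rec sum_negf[symmetric]
      proof (rule sum.cong[OF refl])
        fix i assume "i \<in> {..m}"
        hence "i \<le> m" by simp
        from IH[OF this] show "- (s^(m-i) * ea n i m * ?u i) = s^(m-i) * max (- ?u i) 0"
          using True unfolding ea_def by (cases "ty n i") auto
      qed
      hence eq: "?u (Suc m) = bet s (ea n) m" unfolding bet_def .
      have m1: "1 \<le> m" using True ty1 Suc by (cases m) auto
      have "0 < s^(m-1) * max (- ?u 1) 0" using IH[OF m1] ty1 s by (intro mult_pos_pos) auto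
      also have "\<dots> \<le> bet s (ea n) m" unfolding bet_def
        by (rule member_le_sum[where f="\<lambda>i. s^(m-i) * max (- ?u i) 0"]) (use m1 s0 in auto)
      finally show ?thesis using eq True Suc by simp
    next
      case False
      have "?u (Suc m) = - (\<Sum>i\<le>m. s^(m-i) * max (?u i) 0)"
        unfolding uu_rec
      proof (rule arg_cong[where f=uminus], rule sum.cong[OF refl])
        fix i assume "i \<in> {..m}"
        hence "i \<le> m" by simp
        from IH[OF this] show "s^(m-i) * ea n i m * ?u i = s^(m-i) * max (?u i) 0"
          using False unfolding ea_def by (cases "ty n i") auto
      qed
      hence eq: "?u (Suc m) = - alp s (ea n) m" unfolding alp_def .
      have "0 < s^(m-0) * max (?u 0) 0" using s unfolding uu_def by (simp add: Pm_0)
      also have "\<dots> \<le> alp s (ea n) m" unfolding alp_def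
        by (rule member_le_sum[where f="\<lambda>i. s^(m-i) * max (?u i) 0"]) (use s0 in auto)
      finally show ?thesis using eq False Suc by simp
    qed
  qed
qed

lemma traj_step:
  assumes s: "1 \<le> s" and n: "4 \<le> n" and k: "Suc k \<le> n"
  shows "alp s (ea n) (Suc k) = (if ty n (Suc k) then s * alp s (ea n) k + bet s (ea n) k else s * alp s (ea n) k)"
    "bet s (ea n) (Suc k) = (if ty n (Suc k) then s * bet s (ea n) k else s * bet s (ea n) k + alp s (ea n) k)"
proof -
  note h = sign_inv[OF s n k]
  show "alp s (ea n) (Suc k) = (if ty n (Suc k) then s * alp s (ea n) k + bet s (ea n) k else s * alp s (ea n) k)"
    using h unfolding alp_Suc by (cases "ty n (Suc k)") auto
  show "bet s (ea n) (Suc k) = (if ty n (Suc k) then s * bet s (ea n) k else s * bet s (ea n) k + alp s (ea n) k)"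
    using h unfolding bet_Suc by (cases "ty n (Suc k)") auto
qed

lemma traj:
  assumes s: "1 \<le> s" and n: "4 \<le> n"
  shows "d + 2 \<le> n - 2 \<Longrightarrow> (alp s (ea n) (d+2), bet s (ea n) (d+2)) =
     (if odd (d+2) then (p s (d+2), s * p s (d+1)) else (s * p s (d+1), p s (d+2)))"
proof (induction d)
  case 0
  have t1: "\<not> ty n 1" "\<not> ty n 2" unfolding ty_def tb_def using n by auto
  have a1: "alp s (ea n) 1 = s" "bet s (ea n) 1 = 1"
    using traj_step[OF s n, of 0] t1 n by (simp_all add: alp_0 bet_0)
  have "alp s (ea n) 2 = s * s" "bet s (ea n) 2 = 2 * s"
    using traj_step[OF s n, of 1] t1 n a1 by (simp_all add: numeral_2_eq_2)
  moreover have "p s 2 = 2 * s" using s by (simp add: p2)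
  ultimately show ?case by (simp add: numeral_2_eq_2)
next
  case (Suc d)
  have IH: "(alp s (ea n) (d+2), bet s (ea n) (d+2)) =
     (if odd (d+2) then (p s (d+2), s * p s (d+1)) else (s * p s (d+1), p s (d+2)))"
    using Suc by simp
  have tyk: "ty n (Suc (d+2)) = odd (Suc (d+2))" unfolding ty_def using Suc tb_odd[of "Suc (d+2)"] by auto
  have pe: "p s (Suc (d+2)) = p s (d+2) + s^2 * p s (d+1)" by (simp add: numeral_2_eq_2)
  have st: "Suc (d+2) \<le> n" using Suc by simp
  show ?case
  proof (cases "odd (d+2)")
    case True
    hence "alp s (ea n) (d+2) = p s (d+2)" "bet s (ea n) (d+2) = s * p s (d+1)" using IH by auto
    thus ?thesis using traj_step[OF s n st] tyk True pe
      by (simp add: power2_eq_square algebra_simps)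
  next
    case False
    hence "alp s (ea n) (d+2) = s * p s (d+1)" "bet s (ea n) (d+2) = p s (d+2)" using IH by auto
    thus ?thesis using traj_step[OF s n st] tyk False pe
      by (simp add: power2_eq_square algebra_simps)
  qed
qed

lemma existence:
  assumes s: "1 \<le> s" and s2: "s \<le> 5/4" and n: "4 \<le> n"
  shows "\<exists>B\<in>hess_set s n {0..1}. \<bar>det B\<bar> = fX1 s (n-4)"
proof -
  let ?a = "ea n"
  define B where "B = mat n n (\<lambda>(i,j). hf s ?a i j)"
  have Bin: "B \<in> hess_set s n {0..1}"
    unfolding hess_set_def B_def by (auto simp: hf_def ea_def)
  have detB: "det B = Pm s ?a n" unfolding B_def Pm_def ..
  obtain d where d: "n = d + 4" using n by (metis add.commute le_Suc_ex)
  have n2: "n - 2 = d + 2" "n - 1 = Suc (d+2)" "n = Suc (Suc (d+2))" using d by auto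
  have tr: "(alp s ?a (d+2), bet s ?a (d+2)) =
     (if odd (d+2) then (p s (d+2), s * p s (d+1)) else (s * p s (d+1), p s (d+2)))"
    by (rule traj[OF s n]) (use n2 in simp)
  have tyn1: "ty n (Suc (d+2)) = odd (d+2)" unfolding ty_def using n2 tb_odd[of "d+2"] by auto
  have tyn: "ty n (Suc (Suc (d+2))) = even (d+2)" unfolding ty_def using n2 tb_odd[of "d+2"] by auto
  have st1: "Suc (d+2) \<le> n" using n2 by simp
  have un: "uu s ?a n = (if ty n n then bet s ?a (n-1) else - alp s ?a (n-1))"
    using sign_inv[OF s n, of n] n by simp
  have fx: "fX1 s (n-4) = s * p s (d+2) + s * p s (d+1)" unfolding fX1_def d by simp
  have "\<bar>det B\<bar> = \<bar>uu s ?a n\<bar>" unfolding detB uu_def by (simp add: abs_mult)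
  also have "\<dots> = fX1 s (n-4)"
  proof (cases "odd (d+2)")
    case True
    have "alp s ?a (n-1) = s * p s (d+2) + s * p s (d+1)"
      unfolding n2(2) using traj_step(1)[OF s n st1] tyn1 True tr by simp
    moreover have "\<not> ty n n" using tyn True n2 by simp
    moreover have "0 \<le> s * p s (d+2) + s * p s (d+1)" using p_pos[OF s s2, of "d+2"] p_pos[OF s s2, of "d+1"] s
      by (intro add_nonneg_nonneg mult_nonneg_nonneg; linarith)
    ultimately show ?thesis using un fx by simp
  next
    case False
    have "bet s ?a (n-1) = s * p s (d+2) + s * p s (d+1)"
      unfolding n2(2) using traj_step(2)[OF s n st1] tyn1 False tr by simp
    moreover have "ty n n" using tyn False n2 by simp
    moreover have "0 \<le> s * p s (d+2) + s * p s (d+1)" using p_pos[OF s s2, of "d+2"] p_pos[OF s s2, of "d+1"] s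
      by (intro add_nonneg_nonneg mult_nonneg_nonneg; linarith)
    ultimately show ?thesis using un fx by simp
  qed
  finally show ?thesis using Bin by blast
qed




lemma fX1_0: "r \<noteq> 0 \<Longrightarrow> fX1 r 0 = 3 * r^2"
  by (simp add: fX1_def p2 power2_eq_square)
lemma fX1_1: "r \<noteq> 0 \<Longrightarrow> fX1 r 1 = r^4 + 4 * r^2"
  by (simp add: fX1_def p2 p3 power2_eq_square power3_eq_cube algebra_simps eval_nat_numeral)
lemma fX1_SS: "fX1 r (Suc (Suc j)) = fX1 r (Suc j) + r^2 * fX1 r j"
  by (simp add: fX1_def eval_nat_numeral algebra_simps)

lemma D_fX1:
  assumes t: "0 < t" and s: "0 < s"
  shows "D (k+4) s t = t^(k+4) * fX1 (s/t) k"
proof (induction k rule: less_induct)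
  case (less k)
  have r0: "s/t \<noteq> 0" using s t by simp
  show ?case
  proof (cases k)
    case 0
    have "D 4 s t = 3 * s^2 * t^2" by (simp add: eval_nat_numeral)
    thus ?thesis using 0 fX1_0[OF r0] t by (simp add: field_simps eval_nat_numeral)
  next
    case (Suc j)
    show ?thesis
    proof (cases j)
      case 0
      have "D 5 s t = s^4 * t + 4 * s^2 * t^3" by (simp add: eval_nat_numeral)
      thus ?thesis using Suc 0 fX1_1[OF r0] t by (simp add: field_simps eval_nat_numeral)
    next
      case (Suc i)
      have k: "k = Suc (Suc i)" using Suc \<open>k = Suc j\<close> by simp
      have IH1: "D (Suc i + 4) s t = t^(Suc i + 4) * fX1 (s/t) (Suc i)" using less.IH[of "Suc i"] k by simp
      have IH2: "D (i + 4) s t = t^(i + 4) * fX1 (s/t) i" using less.IH[of i] k by simp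
      have "D (k + 4) s t = t * D (Suc i + 4) s t + s^2 * D (i + 4) s t"
        unfolding k by (simp add: eval_nat_numeral)
      also have "\<dots> = t * (t^(Suc i + 4) * fX1 (s/t) (Suc i)) + s^2 * (t^(i + 4) * fX1 (s/t) i)"
        using IH1 IH2 by simp
      also have "\<dots> = t^(k+4) * fX1 (s/t) k"
        unfolding k fX1_SS using t by (simp add: field_simps power2_eq_square power_add eval_nat_numeral)
      finally show ?thesis .
    qed
  qed
qed

lemma D_fX1': "4 \<le> n \<Longrightarrow> 0 < t \<Longrightarrow> 0 < s \<Longrightarrow> D n s t = t^n * fX1 (s/t) (n-4)"
  using D_fX1[of t s "n-4"] by simp

theorem theorem2p8:
  fixes n :: nat
  assumes "n \<ge> 4"
  shows "\<exists>\<epsilon>>0. \<forall>s t :: real. 0 < t \<and> t \<le> s \<and> s \<le> t * (1 + \<epsilon>) \<longrightarrow>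
           (\<exists>A\<in>hess_set s n {0..t}. \<bar>det A\<bar> = D n s t) \<and>
           (\<forall>A\<in>hess_set s n {0..t}. \<bar>det A\<bar> \<le> D n s t)"
proof (intro exI[of _ "1/4"] conjI allI impI)
  show "(0::real) < 1/4" by simp
  fix s t :: real
  assume st: "0 < t \<and> t \<le> s \<and> s \<le> t * (1 + 1/4)"
  hence t: "0 < t" and ts: "t \<le> s" and st2: "s \<le> t * (1 + 1/4)" by auto
  define r where "r = s / t"
  have s0: "0 < s" using t ts by simp
  have r1: "1 \<le> r" unfolding r_def using t ts by simp
  have r2: "r \<le> 5/4" unfolding r_def using t st2 by (simp add: divide_le_eq algebra_simps)
  have Dn: "D n s t = t^n * fX1 r (n-4)" unfolding r_def by (rule D_fX1'[OF assms t s0])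
  show "\<exists>A\<in>hess_set s n {0..t}. \<bar>det A\<bar> = D n s t"
  proof -
    obtain B where B: "B \<in> hess_set r n {0..1}" and dB: "\<bar>det B\<bar> = fX1 r (n-4)"
      using existence[OF r1 r2 assms] by blast
    define A where "A = t \<cdot>\<^sub>m B"
    have Bc: "B \<in> carrier_mat n n" using B unfolding hess_set_def by auto
    have tr: "t * r = s" unfolding r_def using t by simp
    have "A \<in> hess_set s n {0..t}"
      using B Bc t tr unfolding hess_set_def A_def
      by (auto simp: mult_le_cancel_left1)
    moreover have "\<bar>det A\<bar> = D n s t"
      unfolding A_def Dn using Bc dB t by (simp add: abs_mult)
    ultimately show ?thesis by blast
  qed
  show "\<forall>A\<in>hess_set s n {0..t}. \<bar>det A\<bar> \<le> D n s t"
  proof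
    fix A assume A: "A \<in> hess_set s n {0..t}"
    define B where "B = (1/t) \<cdot>\<^sub>m A"
    have Ac: "A \<in> carrier_mat n n" using A unfolding hess_set_def by auto
    have "B \<in> hess_set r n {0..1}"
      using A Ac t unfolding hess_set_def B_def r_def
      by (auto simp: divide_le_eq)
    hence "\<bar>det B\<bar> \<le> fX1 r (n-4)" by (rule upper_bound[OF r1 r2 assms])
    moreover have "det B = (1/t)^n * det A" unfolding B_def using Ac by simp
    ultimately have "(1/t)^n * \<bar>det A\<bar> \<le> fX1 r (n-4)" using t by (simp add: abs_mult)
    hence "t^n * ((1/t)^n * \<bar>det A\<bar>) \<le> t^n * fX1 r (n-4)" using t by (intro mult_left_mono) auto
    moreover have "t^n * ((1/t)^n * \<bar>det A\<bar>) = \<bar>det A\<bar>" using t by (simp add: power_one_over field_simps)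
    ultimately show "\<bar>det A\<bar> \<le> D n s t" unfolding Dn by simp
  qed
qed


end
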